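(* Let $K$ be finite with $|K|\ge2$, let $f^{\mathcal{W}}:\mathcal{P}^n\to 2^K$ be a voting by committees, and let $i\in N$. Then $S\in V_i$ if and only if there is $k^\star\in K$ such that either (i) $k^\star\in S$ and $i\in\bigcap_{M\in\mathcal{W}_{k^\star}}M$, or (ii) $k^\star\notin S$ and $\{i\}\in\mathcal{W}_{k^\star}$.
   Context: $N=\{1,\dots,n\}$, $n\ge2$; alternatives are subsets of $K$; $\mathcal{P}$ all strict linear orders on $2^K$; $t(P_i)$ the top of $P_i$. A committee for $k$ is a non-empty set $\mathcal{W}_k$ of non-empty subsets of $N$ closed under supersets. $f^{\mathcal{W}}$: $k\in f^{\mathcal{W}}(P)$ iff $\{j\in N:k\in t(P_j)\}\in\mathcal{W}_k$. Option set $O(P_i)=\{f^{\mathcal{W}}(P_i,P_{-i}):P_{-i}\in\mathcal{P}^{n-1}\}$. Agent $i$ vetoes $S\in 2^K$ via $P_i$ if $S\notin O(P_i)$; $V_i$ is the set of alternatives $i$ vetoes via some preference. *)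

theory Defs
  imports Main
begin

text \<open>A preference is a relation R on Pow K; (S, T) \<in> R means S is strictly
  preferred to T.\<close>

definition agents :: "nat \<Rightarrow> nat set" where
  "agents n = {1..n}"

definition prefs :: "'a set \<Rightarrow> ('a set \<times> 'a set) set set" where
  "prefs K = {R. R \<subseteq> Pow K \<times> Pow K \<and> strict_linear_order_on (Pow K) R}"

definition top_pref :: "'a set \<Rightarrow> ('a set \<times> 'a set) set \<Rightarrow> 'a set" where
  "top_pref K R = (THE S. S \<in> Pow K \<and> (\<forall>T \<in> Pow K. T \<noteq> S \<longrightarrow> (S, T) \<in> R))"

definition committee :: "nat \<Rightarrow> nat set set \<Rightarrow> bool" where
  "committee n Wk \<longleftrightarrow> Wk \<noteq> {} \<and>
     (\<forall>M \<in> Wk. M \<noteq> {} \<and> M \<subseteq> agents n) \<and>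
     (\<forall>M M'. M \<in> Wk \<longrightarrow> M \<subseteq> M' \<longrightarrow> M' \<subseteq> agents n \<longrightarrow> M' \<in> Wk)"

definition voting_by_committees :: "nat \<Rightarrow> 'a set \<Rightarrow> ('a \<Rightarrow> nat set set) \<Rightarrow> bool" where
  "voting_by_committees n K W \<longleftrightarrow> (\<forall>k \<in> K. committee n (W k))"

definition profile :: "nat \<Rightarrow> 'a set \<Rightarrow> (nat \<Rightarrow> ('a set \<times> 'a set) set) \<Rightarrow> bool" where
  "profile n K P \<longleftrightarrow> (\<forall>j \<in> agents n. P j \<in> prefs K)"

definition fW :: "nat \<Rightarrow> 'a set \<Rightarrow> ('a \<Rightarrow> nat set set)
    \<Rightarrow> (nat \<Rightarrow> ('a set \<times> 'a set) set) \<Rightarrow> 'a set" where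
  "fW n K W P = {k \<in> K. {j \<in> agents n. k \<in> top_pref K (P j)} \<in> W k}"

definition option_set :: "nat \<Rightarrow> 'a set \<Rightarrow> ('a \<Rightarrow> nat set set) \<Rightarrow> nat
    \<Rightarrow> ('a set \<times> 'a set) set \<Rightarrow> 'a set set" where
  "option_set n K W i R = {fW n K W (Q(i := R)) | Q. profile n K Q}"

definition vetoes :: "nat \<Rightarrow> 'a set \<Rightarrow> ('a \<Rightarrow> nat set set) \<Rightarrow> nat \<Rightarrow> 'a set set" where
  "vetoes n K W i = {S \<in> Pow K. \<exists>R \<in> prefs K. S \<notin> option_set n K W i R}"

end

theory Submission
  imports Defs
begin

lemma mkpref:
  assumes "finite K" "A \<subseteq> K"
  shows "\<exists>R \<in> prefs K. top_pref K R = A"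
proof -
  obtain g :: "'a set \<Rightarrow> nat" and m where g: "inj_on g (Pow K)"
    using finite_imp_inj_to_nat_seg[of "Pow K"] assms(1) by auto
  define f where "f = (\<lambda>x. if x = A then 0 else Suc (g x))"
  have f: "inj_on f (Pow K)" using g unfolding f_def inj_on_def by auto
  define R where "R = {(x,y). x \<in> Pow K \<and> y \<in> Pow K \<and> f x < f y}"
  have "R \<in> prefs K"
    unfolding prefs_def strict_linear_order_on_def R_def trans_def irrefl_def total_on_def
    using f inj_on_eq_iff[OF f] by (auto simp: linorder_neq_iff)
  moreover have "top_pref K R = A"
    unfolding top_pref_def
  proof (rule the_equality)
    show "A \<in> Pow K \<and> (\<forall>T\<in>Pow K. T \<noteq> A \<longrightarrow> (A, T) \<in> R)"
      using assms(2) by (auto simp: R_def f_def)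
  next
    fix S assume S: "S \<in> Pow K \<and> (\<forall>T\<in>Pow K. T \<noteq> S \<longrightarrow> (S, T) \<in> R)"
    show "S = A"
    proof (rule ccontr)
      assume "S \<noteq> A"
      then have "(S, A) \<in> R" using S assms(2) by auto
      then show False by (auto simp: R_def f_def)
    qed
  qed
  ultimately show ?thesis by blast
qed

theorem lemma3:
  fixes n :: nat and K :: "'a set" and W :: "'a \<Rightarrow> nat set set"
    and i :: nat and S :: "'a set"
  assumes "n \<ge> 2"
    and "finite K" and "card K \<ge> 2"
    and "voting_by_committees n K W"
    and "i \<in> agents n"
    and "S \<subseteq> K"
  shows "S \<in> vetoes n K W i \<longleftrightarrow>
    (\<exists>k \<in> K. (k \<in> S \<and> i \<in> \<Inter>(W k)) \<or> (k \<notin> S \<and> {i} \<in> W k))"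
proof -
  define N where "N = agents n"
  have com: "\<And>k. k \<in> K \<Longrightarrow> committee n (W k)"
    using assms(4) unfolding voting_by_committees_def by auto
  have sub: "\<And>k M. k \<in> K \<Longrightarrow> M \<in> W k \<Longrightarrow> M \<subseteq> N \<and> M \<noteq> {}"
    using com unfolding committee_def N_def by blast
  have up: "\<And>k M M'. k \<in> K \<Longrightarrow> M \<in> W k \<Longrightarrow> M \<subseteq> M' \<Longrightarrow> M' \<subseteq> N \<Longrightarrow> M' \<in> W k"
    using com unfolding committee_def N_def by blast
  have NW: "\<And>k. k \<in> K \<Longrightarrow> N \<in> W k"
  proof -
    fix k assume k: "k \<in> K"
    then obtain M where "M \<in> W k" using com unfolding committee_def by blast
    then show "N \<in> W k" using up[OF k] sub[OF k] by blast
  qed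
  have iN: "i \<in> N" using assms(5) N_def by simp
  define pr where "pr = (\<lambda>A. SOME R. R \<in> prefs K \<and> top_pref K R = A)"
  have pr: "\<And>A. A \<subseteq> K \<Longrightarrow> pr A \<in> prefs K \<and> top_pref K (pr A) = A"
    unfolding pr_def using mkpref[OF assms(2)] by (metis (mono_tags, lifting) someI_ex)
  show ?thesis
  proof
    assume "S \<in> vetoes n K W i"
    then obtain R where R: "R \<in> prefs K" and nS: "S \<notin> option_set n K W i R"
      unfolding vetoes_def by blast
    show "\<exists>k \<in> K. (k \<in> S \<and> i \<in> \<Inter>(W k)) \<or> (k \<notin> S \<and> {i} \<in> W k)"
    proof (rule ccontr)
      assume H: "\<not> ?thesis"
      define T where "T = top_pref K R"
      define Q where "Q = (\<lambda>j::nat. pr S)"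
      have prof: "profile n K Q" unfolding profile_def Q_def using pr[OF assms(6)] by simp
      have C: "{j \<in> agents n. k \<in> top_pref K ((Q(i := R)) j)}
          = (if k \<in> S then N - {i} else {}) \<union> (if k \<in> T then {i} else {})" for k
        using pr[OF assms(6)] iN unfolding Q_def T_def N_def by auto
      have "fW n K W (Q(i := R)) = S"
      proof -
        have "k \<in> fW n K W (Q(i := R)) \<longleftrightarrow> k \<in> S" if k: "k \<in> K" for k
        proof (cases "k \<in> S")
          case True
          show ?thesis
          proof (cases "k \<in> T")
            case True
            then show ?thesis using \<open>k \<in> S\<close> k C[of k] NW[OF k] iN unfolding fW_def
              by (simp add: insert_absorb)
          next
            case False
            obtain M where M: "M \<in> W k" "i \<notin> M" using H k \<open>k \<in> S\<close> by blast
            have "M \<subseteq> N - {i}" using sub[OF k M(1)] M(2) by blast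
            then have "N - {i} \<in> W k" using up[OF k M(1)] by blast
            then show ?thesis using \<open>k \<in> S\<close> False k C[of k] unfolding fW_def by simp
          qed
        next
          case False
          show ?thesis
          proof (cases "k \<in> T")
            case True
            have "{i} \<notin> W k" using H k False by blast
            then show ?thesis using False True k C[of k] unfolding fW_def by simp
          next
            case F2: False
            have "{} \<notin> W k" using sub[OF k] by blast
            have Ck: "{j \<in> agents n. k \<in> top_pref K ((Q(i := R)) j)} = {}"
              using C[of k] False F2 by simp
            have "k \<notin> fW n K W (Q(i := R))"
            proof
              assume "k \<in> fW n K W (Q(i := R))"
              then have "{j \<in> agents n. k \<in> top_pref K ((Q(i := R)) j)} \<in> W k"
                unfolding fW_def by blast
              then have "{} \<in> W k" by (simp only: Ck)
              then show False using \<open>{} \<notin> W k\<close> by blast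
            qed
            then show ?thesis using False by blast
          qed
        qed
        moreover have "fW n K W (Q(i := R)) \<subseteq> K" unfolding fW_def by auto
        ultimately show ?thesis using assms(6) by blast
      qed
      then have "S \<in> option_set n K W i R" unfolding option_set_def using prof by blast
      then show False using nS by simp
    qed
  next
    assume "\<exists>k \<in> K. (k \<in> S \<and> i \<in> \<Inter>(W k)) \<or> (k \<notin> S \<and> {i} \<in> W k)"
    then obtain k where k: "k \<in> K" and D: "(k \<in> S \<and> i \<in> \<Inter>(W k)) \<or> (k \<notin> S \<and> {i} \<in> W k)"
      by blast
    from D show "S \<in> vetoes n K W i"
    proof
      assume A: "k \<in> S \<and> i \<in> \<Inter>(W k)"
      have "S \<notin> option_set n K W i (pr {})"
      proof
        assume "S \<in> option_set n K W i (pr {})"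
        then obtain Q where "S = fW n K W (Q(i := pr {}))" unfolding option_set_def by blast
        then have "{j \<in> agents n. k \<in> top_pref K ((Q(i := pr {})) j)} \<in> W k"
          using A unfolding fW_def by blast
        then have "i \<in> {j \<in> agents n. k \<in> top_pref K ((Q(i := pr {})) j)}" using A by blast
        then show False using pr[of "{}"] by simp
      qed
      then show ?thesis unfolding vetoes_def using pr[of "{}"] assms(6) by blast
    next
      assume A: "k \<notin> S \<and> {i} \<in> W k"
      have "S \<notin> option_set n K W i (pr K)"
      proof
        assume "S \<in> option_set n K W i (pr K)"
        then obtain Q where Q: "S = fW n K W (Q(i := pr K))" unfolding option_set_def by blast
        have "{i} \<subseteq> {j \<in> agents n. k \<in> top_pref K ((Q(i := pr K)) j)}"
          using pr[of K] k iN N_def by simp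
        then have "{j \<in> agents n. k \<in> top_pref K ((Q(i := pr K)) j)} \<in> W k"
          using up[OF k] A N_def by blast
        then have "k \<in> S" using Q k unfolding fW_def by blast
        then show False using A by simp
      qed
      then show ?thesis unfolding vetoes_def using pr[of K] assms(6) by blast
    qed
  qed
qed

end
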